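(* Let $f$ be the two-layer network below with scaling $b>0$ and let $R>0$. Let $x_1,\dots,x_T\in\mathbb{S}_p$ and let $\ell_1,\dots,\ell_T:\mathbb{R}^d\to\mathbb{R}$ be convex, differentiable and $L$-Lipschitz, and write $\ell_t(\theta)=\ell_t(f(\theta;x_t))$. Then Algorithm 1 with step sizes $\eta_t=\frac{2Rb}{CL\sqrt m}\,t^{-1/2}$ satisfies $$\sum_{t=1}^T\ell_t(\theta_t)\le\min_{\theta\in B(R)}\sum_{t=1}^T\ell_t(\theta)+\frac{3CLR\sqrt{mT}}{b}+\frac{2CLR^2}{b}T.$$
   Context: Let $p,d\ge1$, $m$ an even positive integer, $b>0$, $C>0$, and $\mathbb{S}_p=\{x\in\mathbb{R}^p:\|x\|_2=1\}$. Let $\sigma:\mathbb{R}\to\mathbb{R}$ be differentiable with $|\sigma'(z)-\sigma'(z')|\le C|z-z'|$ and $|\sigma'(z)|\le C$ for all $z,z'$. Parameters are $\theta=(\theta[1],\dots,\theta[d])\in\mathbb{R}^{d\times m\times p}$, where $\theta[i]\in\mathbb{R}^{m\times p}$ has rows $\theta[i,1]^\top,\dots,\theta[i,m/2]^\top,\bar\theta[i,1]^\top,\dots,\bar\theta[i,m/2]^\top$. The two-layer network is $f(\theta;x)=(f_1(\theta[1];x),\dots,f_d(\theta[d];x))^\top$ with $f_i(\theta[i];x)=\frac1b\big(\sum_{r=1}^{m/2}a_{i,r}\sigma(\theta[i,r]^\top x)+\sum_{r=1}^{m/2}\bar a_{i,r}\sigma(\bar\theta[i,r]^\top x)\big)$,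 where the $a_{i,r}$ are independent uniform signs in $\{\pm1\}$ and $\bar a_{i,r}=-a_{i,r}$, fixed (not trained). The random initialization $\theta_1$ has $\theta_1[i,r]\sim\mathcal N(0,I_p)$ i.i.d. for $r\le m/2$ and $\bar\theta_1[i,r]=\theta_1[i,r]$. $B(R)=\{\theta:\|\theta-\theta_1\|_F\le R\}$. Algorithm 1 (OGD for neural networks): start at $\theta_1$; at round $t$ play $\theta_t$, receive $x_t$ and $\ell_t$, and update $\theta_{t+1}=\Pi_{B(R)}(\theta_t-\eta_t\nabla_\theta\ell_t(f(\theta_t;x_t)))$, where $\Pi_{B(R)}$ is Frobenius-norm projection onto $B(R)$. *)

theory Defs
  imports "HOL-Analysis.Analysis"
begin

text \<open>Parameters theta in R^(d x m x p) are elements of real^'p^('h \<times> bool)^'d.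
 Row index (r,True) stands for theta[i,r], (r,False) for bar-theta[i,r]; m = 2 * CARD('h).
 The Euclidean norm on this type is the Frobenius norm.\<close>

type_synonym ('p,'h,'d) params = "real^'p^('h \<times> bool)^'d"

definition net :: "real \<Rightarrow> (real \<Rightarrow> real) \<Rightarrow> real^('h::finite \<times> bool)^'d \<Rightarrow>
    ('p::finite,'h,'d::finite) params \<Rightarrow> real^'p \<Rightarrow> real^'d" where
  "net b \<sigma> a \<theta> x = (\<chi> i. (1 / b) * (\<Sum>r\<in>UNIV. a$i$r * \<sigma> ((\<theta>$i$r) \<bullet> x)))"

definition grad :: "('a::real_inner \<Rightarrow> real) \<Rightarrow> 'a \<Rightarrow> 'a" where
  "grad F \<theta> = (SOME G. (F has_derivative (\<lambda>h. G \<bullet> h)) (at \<theta>))"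

end

theory Submission
  imports Defs
begin

lemma sigma_lip:
  fixes \<sigma> \<sigma>' :: "real \<Rightarrow> real"
  assumes d: "\<And>z. (\<sigma> has_real_derivative \<sigma>' z) (at z)"
    and bd: "\<And>z. \<bar>\<sigma>' z\<bar> \<le> C"
  shows "\<bar>\<sigma> u - \<sigma> v\<bar> \<le> C * \<bar>u - v\<bar>"
proof -
  have *: "\<bar>\<sigma> u - \<sigma> v\<bar> \<le> C * \<bar>u - v\<bar>" if vu: "v < u" for u v
  proof -
    obtain z where "\<sigma> u - \<sigma> v = (u - v) * \<sigma>' z" using MVT2[OF vu d] by blast
    then have "\<bar>\<sigma> u - \<sigma> v\<bar> = \<bar>u - v\<bar> * \<bar>\<sigma>' z\<bar>" by (simp add: abs_mult)
    also have "\<dots> \<le> \<bar>u - v\<bar> * C" by (intro mult_left_mono bd) simp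
    finally show ?thesis by (simp add: mult.commute)
  qed
  consider "v < u" | "u = v" | "u < v" by linarith
  then show ?thesis
  proof cases
    case 3 then show ?thesis using *[OF 3] by (simp add: abs_minus_commute)
  qed (use * in auto)
qed

lemma sigma_taylor:
  fixes \<sigma> \<sigma>' :: "real \<Rightarrow> real"
  assumes d: "\<And>z. (\<sigma> has_real_derivative \<sigma>' z) (at z)"
    and lip: "\<And>z z'. \<bar>\<sigma>' z - \<sigma>' z'\<bar> \<le> C * \<bar>z - z'\<bar>"
  shows "\<bar>\<sigma> (u + w) - \<sigma> u - \<sigma>' u * w\<bar> \<le> C / 2 * w^2"
proof -
  define \<phi> where "\<phi> c t = \<sigma> (u + t) - \<sigma> u - \<sigma>' u * t + c * (C/2) * t^2" for c t
  have dphi: "(\<phi> c has_real_derivative (\<sigma>' (u + t) - \<sigma>' u + c * C * t)) (at t)" for c t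
    unfolding \<phi>_def
    by (rule derivative_eq_intros DERIV_chain2[OF d] | simp)+
  have phi0: "\<phi> c 0 = 0" for c by (simp add: \<phi>_def)
  have L: "\<bar>\<sigma>' (u + t) - \<sigma>' u\<bar> \<le> C * \<bar>t\<bar>" for t using lip[of "u+t" u] by simp
  have up: "\<phi> (-1) w \<le> 0" and lo: "\<phi> 1 w \<ge> 0"
  proof -
    consider "w > 0" | "w = 0" | "w < 0" by linarith
    then have "\<phi> (-1) w \<le> 0 \<and> \<phi> 1 w \<ge> 0"
    proof cases
      case 1
      obtain z1 where z1: "z1 > 0" "z1 < w" "\<phi> (-1) w - \<phi> (-1) 0 = (w - 0) * (\<sigma>' (u + z1) - \<sigma>' u + (-1) * C * z1)"
        using MVT2[OF 1 dphi[of "(-1)"]] by blast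
      obtain z2 where z2: "z2 > 0" "z2 < w" "\<phi> 1 w - \<phi> 1 0 = (w - 0) * (\<sigma>' (u + z2) - \<sigma>' u + 1 * C * z2)"
        using MVT2[OF 1 dphi[of "1"]] by blast
      have "\<sigma>' (u + z1) - \<sigma>' u + (-1) * C * z1 \<le> 0" using L[of z1] z1 by (simp add: abs_le_iff)
      moreover have "\<sigma>' (u + z2) - \<sigma>' u + 1 * C * z2 \<ge> 0" using L[of z2] z2 by (simp add: abs_le_iff)
      ultimately show ?thesis using z1 z2 1 phi0 by (simp add: mult_nonneg_nonpos mult_nonneg_nonneg)
    next
      case 2 then show ?thesis using phi0 by simp
    next
      case 3
      obtain z1 where z1: "z1 > w" "z1 < 0" "\<phi> (-1) 0 - \<phi> (-1) w = (0 - w) * (\<sigma>' (u + z1) - \<sigma>' u + (-1) * C * z1)"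
        using MVT2[OF 3 dphi[of "(-1)"]] by blast
      obtain z2 where z2: "z2 > w" "z2 < 0" "\<phi> 1 0 - \<phi> 1 w = (0 - w) * (\<sigma>' (u + z2) - \<sigma>' u + 1 * C * z2)"
        using MVT2[OF 3 dphi[of "1"]] by blast
      have "\<sigma>' (u + z1) - \<sigma>' u + (-1) * C * z1 \<ge> 0" using L[of z1] z1 by (simp add: abs_le_iff)
      moreover have "\<sigma>' (u + z2) - \<sigma>' u + 1 * C * z2 \<le> 0" using L[of z2] z2 by (simp add: abs_le_iff)
      ultimately show ?thesis using z1 z2 3 phi0 by (simp add: mult_nonpos_nonneg mult_nonpos_nonpos)
    qed
    then show "\<phi> (-1) w \<le> 0" "\<phi> 1 w \<ge> 0" by auto
  qed
  then have "\<sigma> (u + w) - \<sigma> u - \<sigma>' u * w - C / 2 * w^2 \<le> 0" "\<sigma> (u + w) - \<sigma> u - \<sigma>' u * w + C / 2 * w^2 \<ge> 0"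
    unfolding \<phi>_def by (simp_all add: algebra_simps)
  then show ?thesis unfolding abs_le_iff by linarith
qed

lemma sq_norm_params:
  fixes \<theta> :: "real^'p::finite^'r::finite^'d::finite"
  shows "(norm \<theta>)^2 = (\<Sum>i\<in>UNIV. \<Sum>r\<in>UNIV. (norm (\<theta>$i$r))^2)"
  by (simp add: power2_norm_eq_inner inner_vec_def)

lemma sum_sq_le_card:
  fixes f :: "'r::finite \<Rightarrow> real"
  shows "(\<Sum>r\<in>UNIV. \<bar>f r\<bar>)^2 \<le> real CARD('r) * (\<Sum>r\<in>UNIV. (f r)^2)"
proof -
  have "(\<Sum>r\<in>UNIV. \<bar>f r\<bar> * \<bar>1\<bar>) \<le> L2_set f UNIV * L2_set (\<lambda>_::'r. 1::real) UNIV"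
    using L2_set_mult_ineq[of f "\<lambda>_. 1::real" UNIV] by simp
  then have "(\<Sum>r\<in>UNIV. \<bar>f r\<bar>) \<le> L2_set f UNIV * sqrt (real CARD('r))"
    by (simp add: L2_set_def)
  moreover have "0 \<le> (\<Sum>r\<in>UNIV. \<bar>f r\<bar>)" by (simp add: sum_nonneg)
  ultimately have "(\<Sum>r\<in>UNIV. \<bar>f r\<bar>)^2 \<le> (L2_set f UNIV * sqrt (real CARD('r)))^2"
    by (rule power_mono)
  also have "\<dots> = real CARD('r) * (\<Sum>r\<in>UNIV. (f r)^2)"
    by (simp add: power_mult_distrib L2_set_def sum_nonneg)
  finally show ?thesis .
qed

lemma inner_x_le:
  fixes v x :: "real^'p::finite"
  assumes "norm x = 1"
  shows "\<bar>v \<bullet> x\<bar> \<le> norm v"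
  using Cauchy_Schwarz_ineq2[of v x] assms by simp

lemma net_lip:
  fixes \<theta> \<theta>' :: "real^'p::finite^('h::finite\<times>bool)^'d::finite" and x :: "real^'p"
  assumes b: "b > 0" and C: "C \<ge> 0" and x: "norm x = 1"
    and a: "\<And>i r. \<bar>a$i$r\<bar> \<le> 1"
    and sl: "\<And>u v. \<bar>\<sigma> u - \<sigma> v\<bar> \<le> C * \<bar>u - v\<bar>"
  shows "norm (net b \<sigma> a \<theta> x - net b \<sigma> a \<theta>' x) \<le> C * sqrt (real CARD('h\<times>bool)) / b * norm (\<theta> - \<theta>')"
proof -
  let ?n = "\<lambda>i r. norm ((\<theta> - \<theta>')$i$r)"
  have comp: "\<bar>(net b \<sigma> a \<theta> x - net b \<sigma> a \<theta>' x)$i\<bar> \<le> C / b * (\<Sum>r\<in>UNIV. \<bar>?n i r\<bar>)" for i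
  proof -
    have "(net b \<sigma> a \<theta> x - net b \<sigma> a \<theta>' x)$i = (1/b) * (\<Sum>r\<in>UNIV. a$i$r * (\<sigma> (\<theta>$i$r \<bullet> x) - \<sigma> (\<theta>'$i$r \<bullet> x)))"
      by (simp add: net_def algebra_simps sum_subtractf)
    also have "\<bar>\<dots>\<bar> = (1/b) * \<bar>\<Sum>r\<in>UNIV. a$i$r * (\<sigma> (\<theta>$i$r \<bullet> x) - \<sigma> (\<theta>'$i$r \<bullet> x))\<bar>"
      using b by (simp add: abs_mult)
    also have "\<dots> \<le> (1/b) * (\<Sum>r\<in>UNIV. \<bar>a$i$r * (\<sigma> (\<theta>$i$r \<bullet> x) - \<sigma> (\<theta>'$i$r \<bullet> x))\<bar>)"
      using b by (intro mult_left_mono sum_abs) auto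
    also have "\<dots> \<le> (1/b) * (\<Sum>r\<in>UNIV. C * \<bar>?n i r\<bar>)"
    proof (intro mult_left_mono sum_mono)
      fix r
      have "\<bar>a$i$r * (\<sigma> (\<theta>$i$r \<bullet> x) - \<sigma> (\<theta>'$i$r \<bullet> x))\<bar> \<le> 1 * (C * \<bar>\<theta>$i$r \<bullet> x - \<theta>'$i$r \<bullet> x\<bar>)"
        unfolding abs_mult by (intro mult_mono a sl) auto
      also have "\<bar>\<theta>$i$r \<bullet> x - \<theta>'$i$r \<bullet> x\<bar> \<le> ?n i r"
        using inner_x_le[OF x, of "(\<theta> - \<theta>')$i$r"] by (simp add: inner_diff_left)
      then have "1 * (C * \<bar>\<theta>$i$r \<bullet> x - \<theta>'$i$r \<bullet> x\<bar>) \<le> C * \<bar>?n i r\<bar>"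
        using C by (simp add: mult_left_mono)
      finally show "\<bar>a$i$r * (\<sigma> (\<theta>$i$r \<bullet> x) - \<sigma> (\<theta>'$i$r \<bullet> x))\<bar> \<le> C * \<bar>?n i r\<bar>" .
    qed (use b in simp)
    finally show ?thesis by (simp add: sum_distrib_left)
  qed
  have "(norm (net b \<sigma> a \<theta> x - net b \<sigma> a \<theta>' x))^2 = (\<Sum>i\<in>UNIV. ((net b \<sigma> a \<theta> x - net b \<sigma> a \<theta>' x)$i)^2)"
    unfolding power2_norm_eq_inner inner_vec_def by (simp add: power2_eq_square)
  also have "\<dots> \<le> (\<Sum>i\<in>UNIV. (C / b)^2 * (real CARD('h\<times>bool) * (\<Sum>r\<in>UNIV. (?n i r)^2)))"
  proof (rule sum_mono)
    fix i
    have "((net b \<sigma> a \<theta> x - net b \<sigma> a \<theta>' x)$i)^2 \<le> (C / b * (\<Sum>r\<in>UNIV. \<bar>?n i r\<bar>))^2"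
      using comp[of i] by (metis abs_ge_zero power2_abs power_mono)
    also have "\<dots> = (C/b)^2 * (\<Sum>r\<in>UNIV. \<bar>?n i r\<bar>)^2" by (simp only: power_mult_distrib)
    also have "\<dots> \<le> (C/b)^2 * (real CARD('h\<times>bool) * (\<Sum>r\<in>UNIV. (?n i r)^2))"
      using sum_sq_le_card[of "?n i"] by (intro mult_left_mono) auto
    finally show "((net b \<sigma> a \<theta> x - net b \<sigma> a \<theta>' x)$i)^2 \<le> (C / b)^2 * (real CARD('h\<times>bool) * (\<Sum>r\<in>UNIV. (?n i r)^2))" .
  qed
  also have "\<dots> = (C / b)^2 * real CARD('h\<times>bool) * (\<Sum>i\<in>UNIV. \<Sum>r\<in>UNIV. (?n i r)^2)"
    by (simp only: sum_distrib_left mult.assoc)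
  also have "\<dots> = (C * sqrt (real CARD('h\<times>bool)) / b * norm (\<theta> - \<theta>'))^2"
  proof -
    have "(C * sqrt (real CARD('h\<times>bool)) / b * norm (\<theta> - \<theta>'))^2 = (C / b)^2 * real CARD('h\<times>bool) * (norm (\<theta> - \<theta>'))^2"
      by (simp add: power_mult_distrib power_divide)
    then show ?thesis using sq_norm_params[of "\<theta> - \<theta>'"] by simp
  qed
  finally have sq: "(norm (net b \<sigma> a \<theta> x - net b \<sigma> a \<theta>' x))^2 \<le> (C * sqrt (real CARD('h\<times>bool)) / b * norm (\<theta> - \<theta>'))^2" .
  have "0 \<le> C * sqrt (real CARD('h\<times>bool)) / b * norm (\<theta> - \<theta>')"
    using b C by (intro mult_nonneg_nonneg divide_nonneg_pos) auto
  then show ?thesis by (rule power2_le_imp_le[OF sq])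
qed

definition netD :: "real \<Rightarrow> (real \<Rightarrow> real) \<Rightarrow> real^('h::finite \<times> bool)^'d \<Rightarrow>
    ('p::finite,'h,'d::finite) params \<Rightarrow> ('p,'h,'d) params \<Rightarrow> real^'p \<Rightarrow> real^'d" where
  "netD b \<sigma>' a \<theta> h x = (\<chi> i. (1 / b) * (\<Sum>r\<in>UNIV. a$i$r * (\<sigma>' ((\<theta>$i$r) \<bullet> x) * ((h$i$r) \<bullet> x))))"

lemma net_taylor:
  fixes \<theta> h :: "real^'p::finite^('h::finite\<times>bool)^'d::finite" and x :: "real^'p"
  assumes b: "b > 0" and C: "C \<ge> 0" and x: "norm x = 1"
    and a: "\<And>i r. \<bar>a$i$r\<bar> \<le> 1"
    and st: "\<And>u w. \<bar>\<sigma> (u + w) - \<sigma> u - \<sigma>' u * w\<bar> \<le> C / 2 * w^2"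
  shows "norm (net b \<sigma> a (\<theta> + s *\<^sub>R h) x - net b \<sigma> a \<theta> x - s *\<^sub>R netD b \<sigma>' a \<theta> h x) \<le> C / (2 * b) * s^2 * (norm h)^2"
proof -
  let ?E = "net b \<sigma> a (\<theta> + s *\<^sub>R h) x - net b \<sigma> a \<theta> x - s *\<^sub>R netD b \<sigma>' a \<theta> h x"
  have comp: "\<bar>?E $ i\<bar> \<le> C / (2 * b) * s^2 * (\<Sum>r\<in>UNIV. (norm (h$i$r))^2)" for i
  proof -
    have eqE: "?E $ i = (1/b) * (\<Sum>r\<in>UNIV. a$i$r * (\<sigma> (\<theta>$i$r \<bullet> x + s * (h$i$r \<bullet> x)) - \<sigma> (\<theta>$i$r \<bullet> x) - \<sigma>' (\<theta>$i$r \<bullet> x) * (s * (h$i$r \<bullet> x))))"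
    proof -
      have pw: "a$i$r * \<sigma> ((\<theta> + s *\<^sub>R h)$i$r \<bullet> x) - a$i$r * \<sigma> (\<theta>$i$r \<bullet> x)
          - s * (a$i$r * (\<sigma>' ((\<theta>$i$r) \<bullet> x) * ((h$i$r) \<bullet> x))) = a$i$r * (\<sigma> (\<theta>$i$r \<bullet> x + s * (h$i$r \<bullet> x)) - \<sigma> (\<theta>$i$r \<bullet> x) - \<sigma>' (\<theta>$i$r \<bullet> x) * (s * (h$i$r \<bullet> x)))" for r
        by (simp add: inner_add_left) (simp add: algebra_simps)
      have "?E $ i = (1/b) * (\<Sum>r\<in>UNIV. a$i$r * \<sigma> ((\<theta> + s *\<^sub>R h)$i$r \<bullet> x)) - (1/b) * (\<Sum>r\<in>UNIV. a$i$r * \<sigma> (\<theta>$i$r \<bullet> x))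
          - s * ((1 / b) * (\<Sum>r\<in>UNIV. a$i$r * (\<sigma>' ((\<theta>$i$r) \<bullet> x) * ((h$i$r) \<bullet> x))))"
        by (simp add: net_def netD_def)
      also have "\<dots> = (1/b) * ((\<Sum>r\<in>UNIV. a$i$r * \<sigma> ((\<theta> + s *\<^sub>R h)$i$r \<bullet> x)) - (\<Sum>r\<in>UNIV. a$i$r * \<sigma> (\<theta>$i$r \<bullet> x))
          - s * (\<Sum>r\<in>UNIV. (a$i$r * (\<sigma>' ((\<theta>$i$r) \<bullet> x) * ((h$i$r) \<bullet> x)))))"
        by (simp only: right_diff_distrib mult.left_commute[of s "1/b"])
      also have "\<dots> = (1/b) * (\<Sum>r\<in>UNIV. a$i$r * \<sigma> ((\<theta> + s *\<^sub>R h)$i$r \<bullet> x) - a$i$r * \<sigma> (\<theta>$i$r \<bullet> x)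
          - s * (a$i$r * (\<sigma>' ((\<theta>$i$r) \<bullet> x) * ((h$i$r) \<bullet> x))))"
        by (simp only: sum_distrib_left[of s] sum_subtractf)
      also have "\<dots> = (1/b) * (\<Sum>r\<in>UNIV. a$i$r * (\<sigma> (\<theta>$i$r \<bullet> x + s * (h$i$r \<bullet> x)) - \<sigma> (\<theta>$i$r \<bullet> x) - \<sigma>' (\<theta>$i$r \<bullet> x) * (s * (h$i$r \<bullet> x))))"
        using pw by (simp only:)
      finally show ?thesis .
    qed
    have "\<bar>?E $ i\<bar> = (1/b) * \<bar>\<Sum>r\<in>UNIV. a$i$r * (\<sigma> (\<theta>$i$r \<bullet> x + s * (h$i$r \<bullet> x)) - \<sigma> (\<theta>$i$r \<bullet> x) - \<sigma>' (\<theta>$i$r \<bullet> x) * (s * (h$i$r \<bullet> x)))\<bar>"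
      unfolding eqE abs_mult using b by simp
    also have "\<dots> \<le> (1/b) * (\<Sum>r\<in>UNIV. \<bar>a$i$r * (\<sigma> (\<theta>$i$r \<bullet> x + s * (h$i$r \<bullet> x)) - \<sigma> (\<theta>$i$r \<bullet> x) - \<sigma>' (\<theta>$i$r \<bullet> x) * (s * (h$i$r \<bullet> x)))\<bar>)"
      using b by (intro mult_left_mono sum_abs) auto
    also have "\<dots> \<le> (1/b) * (\<Sum>r\<in>UNIV. C / 2 * s^2 * (norm (h$i$r))^2)"
    proof (intro mult_left_mono sum_mono)
      fix r
      have A: "\<bar>a$i$r * (\<sigma> (\<theta>$i$r \<bullet> x + s * (h$i$r \<bullet> x)) - \<sigma> (\<theta>$i$r \<bullet> x) - \<sigma>' (\<theta>$i$r \<bullet> x) * (s * (h$i$r \<bullet> x)))\<bar>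
          \<le> 1 * (C / 2 * (s * (h$i$r \<bullet> x))^2)"
        unfolding abs_mult by (rule mult_mono[OF a st]) auto
      have "(h$i$r \<bullet> x)^2 \<le> (norm (h$i$r))^2"
        using inner_x_le[OF x, of "h$i$r"] by (metis abs_ge_zero power2_abs power_mono)
      then have B: "(s * (h$i$r \<bullet> x))^2 \<le> s^2 * (norm (h$i$r))^2"
        by (simp add: power_mult_distrib mult_left_mono)
      have "1 * (C / 2 * (s * (h$i$r \<bullet> x))^2) \<le> C / 2 * (s^2 * (norm (h$i$r))^2)"
        using C B by (simp add: mult_left_mono)
      then show "\<bar>a$i$r * (\<sigma> (\<theta>$i$r \<bullet> x + s * (h$i$r \<bullet> x)) - \<sigma> (\<theta>$i$r \<bullet> x) - \<sigma>' (\<theta>$i$r \<bullet> x) * (s * (h$i$r \<bullet> x)))\<bar>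
          \<le> C / 2 * s^2 * (norm (h$i$r))^2" using A by (simp add: mult.assoc)
    qed (use b in simp)
    also have "\<dots> = C / (2 * b) * s^2 * (\<Sum>r\<in>UNIV. (norm (h$i$r))^2)"
      by (simp only: sum_distrib_left[symmetric]) (simp add: field_simps)
    finally show ?thesis .
  qed
  have "norm ?E \<le> (\<Sum>i\<in>UNIV. \<bar>?E $ i\<bar>)" by (rule norm_le_l1_cart)
  also have "\<dots> \<le> (\<Sum>i\<in>UNIV. C / (2 * b) * s^2 * (\<Sum>r\<in>UNIV. (norm (h$i$r))^2))"
    by (intro sum_mono comp)
  also have "\<dots> = C / (2 * b) * s^2 * (norm h)^2"
    by (simp only: sq_norm_params[of h] sum_distrib_left)
  finally show ?thesis .
qed

lemma chi_sum_axis: "(\<chi> i. f i) = (\<Sum>i\<in>UNIV. f i *\<^sub>R axis i (1::real))"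
  by (simp add: vec_eq_iff sum_component axis_def if_distrib sum.delta cong: if_cong)
lemma net_differentiable:
  fixes \<sigma> :: "real \<Rightarrow> real" and x :: "real^'p::finite"
  assumes "\<And>z. (\<sigma> has_real_derivative \<sigma>' z) (at z)"
  shows "(\<lambda>\<theta>::real^'p^'r::finite^'d::finite. (\<chi> i. (1/b) * (\<Sum>r\<in>UNIV. a$i$r * \<sigma> ((\<theta>$i$r) \<bullet> x)))) differentiable (at \<theta>)"
proof -
  have d: "(\<lambda>\<theta>::real^'p^'r::finite^'d::finite. \<sigma> ((\<theta>$i$r) \<bullet> x)) differentiable (at \<theta>)" for i r
  proof -
    have "(\<lambda>\<theta>::real^'p^'r::finite^'d::finite. (\<theta>$i$r) \<bullet> x) differentiable (at \<theta>)"
      by (intro bounded_linear_imp_differentiable bounded_linear_compose[OF bounded_linear_inner_left]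
          bounded_linear_compose[OF bounded_linear_vec_nth] bounded_linear_vec_nth)
    moreover have "\<sigma> differentiable (at ((\<theta>$i$r) \<bullet> x))"
      using assms real_differentiable_def differentiableI by blast
    ultimately show ?thesis using differentiable_chain_at[of "\<lambda>\<theta>::real^'p^'r^'d. (\<theta>$i$r) \<bullet> x" \<theta> \<sigma>] by (simp add: o_def)
  qed
  show ?thesis
    unfolding chi_sum_axis
  proof (intro differentiable_sum ballI differentiable_scaleR differentiable_const)
    fix i show "(\<lambda>\<theta>::real^'p^'r::finite^'d::finite. (1/b) * (\<Sum>r\<in>UNIV. a$i$r * \<sigma> ((\<theta>$i$r) \<bullet> x))) differentiable (at \<theta>)"
      by (intro differentiable_sum differentiable_mult differentiable_const d ballI) simp
  qed simp
qed

lemma norm_sub_scale: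
  fixes u v :: "'a::real_inner"
  shows "(norm (u - c *\<^sub>R v))^2 = (norm u)^2 - 2 * c * (v \<bullet> u) + c^2 * (norm v)^2"
  unfolding power2_norm_eq_inner
  by (simp add: inner_diff_left inner_diff_right inner_commute[of u v] power2_eq_square algebra_simps)

lemma loss_step:
  fixes N :: "'a::real_normed_vector \<Rightarrow> 'b::real_normed_vector" and lo :: "'b \<Rightarrow> real"
  assumes cv: "convex_on UNIV lo" and lip: "L-lipschitz_on UNIV lo"
    and tay: "\<And>s. norm (N (\<theta> + s *\<^sub>R h) - N \<theta> - s *\<^sub>R D) \<le> K * s^2 * (norm h)^2"
    and s: "0 < s" "s \<le> 1"
  shows "lo (N (\<theta> + s *\<^sub>R h)) - lo (N \<theta>) \<le> s * (lo (N (\<theta> + h)) - lo (N \<theta>) + L * K * (norm h)^2) + s^2 * (L * K * (norm h)^2)"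
proof -
  have L0: "L \<ge> 0" using lip lipschitz_on_nonneg by blast
  have lipD: "lo u - lo v \<le> L * norm (u - v)" for u v
    using lipschitz_onD[OF lip, of u v] by (simp add: dist_norm dist_real_def abs_le_iff)
  define y0 where "y0 = N \<theta>"
  define y1 where "y1 = N (\<theta> + h)"
  define E1 where "E1 = y1 - y0 - D"
  define Es where "Es = N (\<theta> + s *\<^sub>R h) - y0 - s *\<^sub>R D"
  define z where "z = (1 - s) *\<^sub>R y0 + s *\<^sub>R (y1 - E1)"
  have zE: "N (\<theta> + s *\<^sub>R h) = z + Es"
    by (simp add: z_def Es_def E1_def algebra_simps)
  have nE1: "norm E1 \<le> K * (norm h)^2" using tay[of 1] by (simp add: E1_def y1_def y0_def)
  have nEs: "norm Es \<le> K * s^2 * (norm h)^2" using tay[of s] by (simp add: Es_def y0_def)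
  have "lo (N (\<theta> + s *\<^sub>R h)) \<le> lo z + L * norm Es"
    using lipD[of "z + Es" z] zE by simp
  moreover have "lo z \<le> (1 - s) * lo y0 + s * lo (y1 - E1)"
    unfolding z_def using s by (intro convex_onD[OF cv]) auto
  moreover have "lo (y1 - E1) \<le> lo y1 + L * norm E1"
    using lipD[of "y1 - E1" y1] by simp
  ultimately have "lo (N (\<theta> + s *\<^sub>R h)) \<le> (1 - s) * lo y0 + s * (lo y1 + L * norm E1) + L * norm Es"
    using s by (smt (verit, best) mult_left_mono)
  moreover have "s * (L * norm E1) \<le> s * (L * (K * (norm h)^2))"
    using s L0 nE1 by (intro mult_left_mono) auto
  moreover have "L * norm Es \<le> L * (K * s^2 * (norm h)^2)"
    using L0 nEs by (intro mult_left_mono) auto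
  ultimately show ?thesis
    unfolding y0_def y1_def by (simp add: algebra_simps)
qed

lemma deriv_bound:
  fixes F :: "'a::real_inner \<Rightarrow> real"
  assumes d: "(F has_derivative (\<lambda>v. g \<bullet> v)) (at \<theta>)"
    and b: "\<And>s. 0 < s \<Longrightarrow> s \<le> 1 \<Longrightarrow> F (\<theta> + s *\<^sub>R h) - F \<theta> \<le> s * c + s^2 * k"
  shows "g \<bullet> h \<le> c"
proof -
  have lin: "((\<lambda>s::real. \<theta> + s *\<^sub>R h) has_derivative (\<lambda>t. t *\<^sub>R h)) (at 0)"
    by (auto intro!: derivative_eq_intros)
  have "((\<lambda>s. F (\<theta> + s *\<^sub>R h)) has_derivative (\<lambda>t. g \<bullet> (t *\<^sub>R h))) (at 0)"
    using has_derivative_compose[OF lin, of F "\<lambda>v. g \<bullet> v"] d by (simp add: o_def)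
  moreover have "(\<lambda>t. g \<bullet> (t *\<^sub>R h)) = (\<lambda>t. t * (g \<bullet> h))" by (simp add: fun_eq_iff)
  moreover have "(\<lambda>t. t * (g \<bullet> h)) = (*) (g \<bullet> h)" by (simp add: fun_eq_iff)
  ultimately have "((\<lambda>s. F (\<theta> + s *\<^sub>R h)) has_real_derivative (g \<bullet> h)) (at 0)"
    unfolding has_field_derivative_def by simp
  then have "((\<lambda>t. (F (\<theta> + t *\<^sub>R h) - F \<theta>) / t) \<longlongrightarrow> g \<bullet> h) (at 0)"
    by (simp add: DERIV_def)
  then have lim1: "((\<lambda>t. (F (\<theta> + t *\<^sub>R h) - F \<theta>) / t) \<longlongrightarrow> g \<bullet> h) (at_right 0)"
    by (rule filterlim_mono[OF _ order_refl at_le]) simp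
  have lim2: "((\<lambda>t. c + t * k) \<longlongrightarrow> c) (at_right (0::real))"
    by (auto intro!: tendsto_eq_intros)
  have ev: "eventually (\<lambda>t. (F (\<theta> + t *\<^sub>R h) - F \<theta>) / t \<le> c + t * k) (at_right 0)"
    unfolding eventually_at_right_field
  proof (intro exI[of _ 1] conjI allI impI)
    fix t :: real assume t: "0 < t" "t < 1"
    have "F (\<theta> + t *\<^sub>R h) - F \<theta> \<le> t * (c + t * k)"
      using b[of t] t by (simp add: power2_eq_square algebra_simps)
    then show "(F (\<theta> + t *\<^sub>R h) - F \<theta>) / t \<le> c + t * k"
      using t by (simp add: divide_le_eq mult.commute)
  qed simp
  show ?thesis
    by (rule tendsto_le[OF trivial_limit_at_right_real lim2 lim1 ev])
qed

lemma grad_works: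
  fixes F :: "'a::euclidean_space \<Rightarrow> real"
  assumes "F differentiable (at \<theta>)"
  shows "(F has_derivative (\<lambda>v. grad F \<theta> \<bullet> v)) (at \<theta>)"
proof -
  obtain F' where F': "(F has_derivative F') (at \<theta>)" using assms differentiable_def by blast
  then have "linear F'" using has_derivative_linear by blast
  then have "F' v = adjoint F' 1 \<bullet> v" for v
    using adjoint_works[of F' v 1] by (simp add: inner_commute)
  then have "F' = (\<lambda>v. adjoint F' 1 \<bullet> v)" by auto
  with F' have "(F has_derivative (\<lambda>v. adjoint F' 1 \<bullet> v)) (at \<theta>)" by simp
  then have "\<exists>G. (F has_derivative (\<lambda>v. G \<bullet> v)) (at \<theta>)" by blast
  then show ?thesis unfolding grad_def by (rule someI_ex)
qed

lemma sum_inv_sqrt: "(\<Sum>t=1..T. 1 / sqrt (real t)) \<le> 2 * sqrt (real T)"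
proof (induction T)
  case 0 then show ?case by simp
next
  case (Suc T)
  have "1 / sqrt (real (Suc T)) \<le> 2 * sqrt (real (Suc T)) - 2 * sqrt (real T)"
  proof -
    have st: "sqrt (real T) \<le> sqrt (real (Suc T))" by simp
    have pos: "sqrt (real (Suc T)) > 0" by simp
    have "1 = (sqrt (real (Suc T)))^2 - (sqrt (real T))^2" by simp
    also have "\<dots> = (sqrt (real (Suc T)) - sqrt (real T)) * (sqrt (real (Suc T)) + sqrt (real T))"
      by (simp add: power2_eq_square algebra_simps)
    also have "\<dots> \<le> (sqrt (real (Suc T)) - sqrt (real T)) * (2 * sqrt (real (Suc T)))"
      using st by (intro mult_left_mono) auto
    finally have "1 \<le> (2 * sqrt (real (Suc T)) - 2 * sqrt (real T)) * sqrt (real (Suc T))"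
      by (simp add: algebra_simps)
    then show ?thesis using pos by (simp add: divide_le_eq)
  qed
  then show ?case using Suc by simp
qed

lemma ogd_sum:
  fixes A q :: "nat \<Rightarrow> real"
  assumes e0: "e0 > 0"
    and A: "\<And>t. 0 \<le> A t" "\<And>t. A t \<le> D2"
    and q: "\<And>t. 1 \<le> t \<Longrightarrow> t \<le> T \<Longrightarrow> q t \<le> (A t - A (Suc t)) * sqrt (real t) / (2 * e0) + e0 * G2 / (2 * sqrt (real t))"
  shows "(\<Sum>t=1..T. q t) \<le> D2 * sqrt (real T) / (2 * e0) - A (Suc T) * sqrt (real T) / (2 * e0)
            + e0 * G2 / 2 * (\<Sum>t=1..T. 1 / sqrt (real t))"
  using q
proof (induction T)
  case 0 then show ?case by simp
next
  case (Suc T)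
  have IH: "(\<Sum>t=1..T. q t) \<le> D2 * sqrt (real T) / (2 * e0) - A (Suc T) * sqrt (real T) / (2 * e0)
            + e0 * G2 / 2 * (\<Sum>t=1..T. 1 / sqrt (real t))"
    using Suc by auto
  have qS: "q (Suc T) \<le> (A (Suc T) - A (Suc (Suc T))) * sqrt (real (Suc T)) / (2 * e0) + e0 * G2 / (2 * sqrt (real (Suc T)))"
    using Suc.prems[of "Suc T"] by auto
  have mono: "A (Suc T) * (sqrt (real (Suc T)) - sqrt (real T)) \<le> D2 * (sqrt (real (Suc T)) - sqrt (real T))"
    using A by (intro mult_right_mono) auto
  have "(\<Sum>t=1..Suc T. q t) = (\<Sum>t=1..T. q t) + q (Suc T)" by simp
  also have "\<dots> \<le> D2 * sqrt (real T) / (2 * e0) - A (Suc T) * sqrt (real T) / (2 * e0)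
            + e0 * G2 / 2 * (\<Sum>t=1..T. 1 / sqrt (real t))
            + ((A (Suc T) - A (Suc (Suc T))) * sqrt (real (Suc T)) / (2 * e0) + e0 * G2 / (2 * sqrt (real (Suc T))))"
    using IH qS by linarith
  also have "\<dots> \<le> D2 * sqrt (real (Suc T)) / (2 * e0) - A (Suc (Suc T)) * sqrt (real (Suc T)) / (2 * e0)
            + e0 * G2 / 2 * (\<Sum>t=1..Suc T. 1 / sqrt (real t))"
  proof -
    have "A (Suc T) * sqrt (real (Suc T)) / (2 * e0) - A (Suc T) * sqrt (real T) / (2 * e0)
          \<le> D2 * sqrt (real (Suc T)) / (2 * e0) - D2 * sqrt (real T) / (2 * e0)"
      using mono e0 by (simp add: divide_right_mono diff_divide_distrib[symmetric] right_diff_distrib)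
    then show ?thesis by (simp add: algebra_simps add_divide_distrib diff_divide_distrib)
  qed
  finally show ?case .
qed

theorem mainTheorem4:
  fixes b C R L :: real and T :: nat
    and \<sigma> \<sigma>' :: "real \<Rightarrow> real"
    and a :: "real^('h::finite \<times> bool)^'d::finite"
    and \<theta>1 :: "('p::finite,'h,'d) params"
    and x :: "nat \<Rightarrow> real^'p"
    and lo :: "nat \<Rightarrow> real^'d \<Rightarrow> real"
    and \<eta> :: "nat \<Rightarrow> real"
    and \<theta>s :: "nat \<Rightarrow> ('p,'h,'d) params"
  defines "m \<equiv> 2 * CARD('h)"
  assumes b_pos: "b > 0" and C_pos: "C > 0" and R_pos: "R > 0"
    and \<sigma>_deriv: "\<And>z. (\<sigma> has_real_derivative \<sigma>' z) (at z)"
    and \<sigma>'_lip: "\<And>z z'. \<bar>\<sigma>' z - \<sigma>' z'\<bar> \<le> C * \<bar>z - z'\<bar>"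
    and \<sigma>'_bdd: "\<And>z. \<bar>\<sigma>' z\<bar> \<le> C"
    and a_sign: "\<And>i r. a$i$(r,True) \<in> {-1, 1}"
    and a_bar: "\<And>i r. a$i$(r,False) = - a$i$(r,True)"
    and \<theta>1_bar: "\<And>i r. \<theta>1$i$(r,False) = \<theta>1$i$(r,True)"
    and x_sphere: "\<And>t. 1 \<le> t \<Longrightarrow> t \<le> T \<Longrightarrow> x t \<in> sphere 0 1"
    and lo_convex: "\<And>t. 1 \<le> t \<Longrightarrow> t \<le> T \<Longrightarrow> convex_on UNIV (lo t)"
    and lo_diff: "\<And>t z. 1 \<le> t \<Longrightarrow> t \<le> T \<Longrightarrow> lo t differentiable (at z)"
    and lo_lip: "\<And>t. 1 \<le> t \<Longrightarrow> t \<le> T \<Longrightarrow> L-lipschitz_on UNIV (lo t)"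
    and \<eta>_def: "\<And>t. \<eta> t = 2 * R * b / (C * L * sqrt (real m)) * (1 / sqrt (real t))"
    and \<theta>s_1: "\<theta>s 1 = \<theta>1"
    and \<theta>s_step: "\<And>t. 1 \<le> t \<Longrightarrow> \<theta>s (Suc t) =
        closest_point (cball \<theta>1 R)
          (\<theta>s t - \<eta> t *\<^sub>R grad (\<lambda>\<theta>. lo t (net b \<sigma> a \<theta> (x t))) (\<theta>s t))"
  shows "\<forall>\<theta>\<in>cball \<theta>1 R.
     (\<Sum>t=1..T. lo t (net b \<sigma> a (\<theta>s t) (x t)))
       \<le> (\<Sum>t=1..T. lo t (net b \<sigma> a \<theta> (x t)))
          + 3 * C * L * R * sqrt (real m * real T) / b
          + 2 * C * L * R^2 / b * real T"
proof
  fix \<theta> assume \<theta>B: "\<theta> \<in> cball \<theta>1 R"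
  define ell where "ell t th = lo t (net b \<sigma> a th (x t))" for t th
  have mcard: "real m = real CARD('h \<times> bool)" by (simp add: m_def card_prod)
  have m_pos: "real m > 0" by (simp add: m_def)
  have a1: "\<bar>a$i$r\<bar> \<le> 1" for i r
  proof (cases r)
    case (Pair r1 bb) then show ?thesis using a_sign[of i r1] a_bar[of i r1] by (cases bb) auto
  qed
  have sl: "\<bar>\<sigma> u - \<sigma> v\<bar> \<le> C * \<bar>u - v\<bar>" for u v by (rule sigma_lip[OF \<sigma>_deriv \<sigma>'_bdd])
  have st: "\<bar>\<sigma> (u + w) - \<sigma> u - \<sigma>' u * w\<bar> \<le> C / 2 * w^2" for u w by (rule sigma_taylor[OF \<sigma>_deriv \<sigma>'_lip])
  have C0: "C \<ge> 0" using C_pos by simp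
  have inB: "\<theta>s t \<in> cball \<theta>1 R" if "1 \<le> t" for t
    using that
  proof (induction t)
    case 0 then show ?case by simp
  next
    case (Suc t)
    show ?case
    proof (cases "t = 0")
      case True then show ?thesis using \<theta>s_1 R_pos by simp
    next
      case False
      then have "\<theta>s (Suc t) = closest_point (cball \<theta>1 R)
          (\<theta>s t - \<eta> t *\<^sub>R grad (\<lambda>\<theta>. lo t (net b \<sigma> a \<theta> (x t))) (\<theta>s t))" using \<theta>s_step by simp
      moreover have "cball \<theta>1 R \<noteq> {}" using R_pos by (metis centre_in_cball empty_iff less_imp_le)
      ultimately show ?thesis using closest_point_in_set[OF closed_cball] by metis
    qed
  qed
  show "(\<Sum>t=1..T. lo t (net b \<sigma> a (\<theta>s t) (x t)))
       \<le> (\<Sum>t=1..T. lo t (net b \<sigma> a \<theta> (x t)))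
          + 3 * C * L * R * sqrt (real m * real T) / b
          + 2 * C * L * R^2 / b * real T"
  proof (cases "T = 0")
    case True then show ?thesis by simp
  next
    case False
    then have T1: "1 \<le> T" by simp
    have L0: "L \<ge> 0" using lo_lip[OF order_refl T1] lipschitz_on_nonneg by blast
    define G where "G = C * sqrt (real m) / b * L"
    have G0: "G \<ge> 0" unfolding G_def using C0 L0 b_pos by simp
    define g where "g t = grad (\<lambda>\<theta>. lo t (net b \<sigma> a \<theta> (x t))) (\<theta>s t)" for t
    have key: "ell t (\<theta>s t) - ell t \<theta> \<le> g t \<bullet> (\<theta>s t - \<theta>) + 2 * C * L * R^2 / b \<and> norm (g t) \<le> G"
      if t: "1 \<le> t" "t \<le> T" for t
    proof -
      have xn: "norm (x t) = 1" using x_sphere[OF t] by simp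
      have netd: "(\<lambda>th. net b \<sigma> a th (x t)) differentiable (at th)" for th
        unfolding net_def by (rule net_differentiable[OF \<sigma>_deriv])
      have ld: "(\<lambda>th. lo t (net b \<sigma> a th (x t))) differentiable (at (\<theta>s t))"
        using differentiable_chain_at[OF netd lo_diff[OF t]] by (simp add: o_def)
      have hd: "((\<lambda>th. lo t (net b \<sigma> a th (x t))) has_derivative (\<lambda>v. g t \<bullet> v)) (at (\<theta>s t))"
        unfolding g_def by (rule grad_works[OF ld])
      have lipD: "lo t u - lo t v \<le> L * norm (u - v)" for u v
        using lipschitz_onD[OF lo_lip[OF t], of u v] by (simp add: dist_norm dist_real_def abs_le_iff)
      have "g t \<bullet> g t \<le> G * norm (g t)"
      proof (rule deriv_bound[OF hd, where k=0])
        fix s :: real assume s: "0 < s" "s \<le> 1"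
        have "lo t (net b \<sigma> a (\<theta>s t + s *\<^sub>R g t) (x t)) - lo t (net b \<sigma> a (\<theta>s t) (x t))
            \<le> L * norm (net b \<sigma> a (\<theta>s t + s *\<^sub>R g t) (x t) - net b \<sigma> a (\<theta>s t) (x t))" by (rule lipD)
        also have "\<dots> \<le> L * (C * sqrt (real CARD('h \<times> bool)) / b * norm (\<theta>s t + s *\<^sub>R g t - \<theta>s t))"
          by (intro mult_left_mono net_lip[OF b_pos C0 xn a1 sl] L0)
        also have "\<dots> = s * (G * norm (g t))"
          using s unfolding G_def mcard by simp
        finally show "lo t (net b \<sigma> a (\<theta>s t + s *\<^sub>R g t) (x t)) - lo t (net b \<sigma> a (\<theta>s t) (x t))
            \<le> s * (G * norm (g t)) + s^2 * 0" by simp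
      qed
      then have "(norm (g t))^2 \<le> G * norm (g t)" by (simp add: power2_norm_eq_inner)
      then have gb: "norm (g t) \<le> G"
        by (cases "norm (g t) = 0") (use G0 in \<open>auto simp: power2_eq_square\<close>)
      \<comment> \<open>approximate convexity\<close>
      define h where "h = \<theta> - \<theta>s t"
      have hn: "norm h \<le> 2 * R"
      proof -
        have "norm h \<le> dist \<theta>1 \<theta> + dist \<theta>1 (\<theta>s t)"
          unfolding h_def dist_norm by (metis norm_diff_triangle_le norm_minus_commute order_refl)
        then show ?thesis using \<theta>B inB[OF t(1)] by simp
      qed
      let ?K = "C / (2 * b)"
      have "g t \<bullet> h \<le> lo t (net b \<sigma> a (\<theta>s t + h) (x t)) - lo t (net b \<sigma> a (\<theta>s t) (x t)) + L * ?K * (norm h)^2"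
      proof (rule deriv_bound[OF hd, where k="L * ?K * (norm h)^2"])
        fix s :: real assume s: "0 < s" "s \<le> 1"
        show "lo t (net b \<sigma> a (\<theta>s t + s *\<^sub>R h) (x t)) - lo t (net b \<sigma> a (\<theta>s t) (x t))
            \<le> s * (lo t (net b \<sigma> a (\<theta>s t + h) (x t)) - lo t (net b \<sigma> a (\<theta>s t) (x t)) + L * ?K * (norm h)^2)
              + s^2 * (L * ?K * (norm h)^2)"
          by (rule loss_step[OF lo_convex[OF t] lo_lip[OF t] net_taylor[OF b_pos C0 xn a1 st] s])
      qed
      moreover have "L * ?K * (norm h)^2 \<le> 2 * C * L * R^2 / b"
      proof -
        have "(norm h)^2 \<le> (2 * R)^2" using hn by (intro power_mono) auto
        then have "L * ?K * (norm h)^2 \<le> L * ?K * (2 * R)^2"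
          using L0 C0 b_pos by (intro mult_left_mono) auto
        also have "\<dots> = 2 * C * L * R^2 / b" using b_pos by (simp add: field_simps power2_eq_square)
        finally show ?thesis .
      qed
      moreover have "\<theta>s t + h = \<theta>" by (simp add: h_def)
      moreover have "g t \<bullet> h = - (g t \<bullet> (\<theta>s t - \<theta>))" by (simp add: h_def inner_diff_right)
      ultimately show ?thesis using gb unfolding ell_def by simp
    qed
    have sum_split: "(\<Sum>t=1..T. ell t (\<theta>s t)) - (\<Sum>t=1..T. ell t \<theta>) \<le> (\<Sum>t=1..T. g t \<bullet> (\<theta>s t - \<theta>)) + real T * (2 * C * L * R^2 / b)"
    proof -
      have "(\<Sum>t=1..T. ell t (\<theta>s t)) - (\<Sum>t=1..T. ell t \<theta>) = (\<Sum>t=1..T. ell t (\<theta>s t) - ell t \<theta>)"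
        by (simp add: sum_subtractf)
      also have "\<dots> \<le> (\<Sum>t=1..T. g t \<bullet> (\<theta>s t - \<theta>) + 2 * C * L * R^2 / b)"
        using key by (intro sum_mono) auto
      also have "\<dots> = (\<Sum>t=1..T. g t \<bullet> (\<theta>s t - \<theta>)) + real T * (2 * C * L * R^2 / b)"
        by (simp add: sum.distrib)
      finally show ?thesis .
    qed
    have regret: "(\<Sum>t=1..T. g t \<bullet> (\<theta>s t - \<theta>)) \<le> 3 * C * L * R * sqrt (real m * real T) / b"
    proof (cases "L = 0")
      case True
      then have "G = 0" by (simp add: G_def)
      then have "g t = 0" if "1 \<le> t" "t \<le> T" for t using key[OF that] by simp
      then show ?thesis using True by simp
    next
      case False
      then have Lp: "L > 0" using L0 by simp
      define e0 where "e0 = 2 * R * b / (C * L * sqrt (real m))"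
      have e0p: "e0 > 0" unfolding e0_def using R_pos b_pos C_pos Lp m_pos by simp
      define A where "A t = (if t = 0 then 0 else (norm (\<theta>s t - \<theta>))^2)" for t
      have A0: "0 \<le> A t" for t by (simp add: A_def)
      have AD: "A t \<le> (2 * R)^2" for t
      proof (cases "t = 0")
        case True then show ?thesis by (simp add: A_def)
      next
        case False
        have "norm (\<theta>s t - \<theta>) \<le> dist \<theta>1 \<theta> + dist \<theta>1 (\<theta>s t)"
          unfolding dist_norm by (metis norm_diff_triangle_le norm_minus_commute order_refl)
        then have "norm (\<theta>s t - \<theta>) \<le> 2 * R" using \<theta>B inB[of t] False by simp
        then have "(norm (\<theta>s t - \<theta>))^2 \<le> (2 * R)^2" by (intro power_mono) auto
        then show ?thesis using False unfolding A_def by simp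
      qed
      have qb: "g t \<bullet> (\<theta>s t - \<theta>) \<le> (A t - A (Suc t)) * sqrt (real t) / (2 * e0) + e0 * G^2 / (2 * sqrt (real t))"
        if t: "1 \<le> t" "t \<le> T" for t
      proof -
        have et: "\<eta> t = e0 / sqrt (real t)" by (simp add: \<eta>_def e0_def)
        have etp: "\<eta> t > 0" using et e0p t by simp
        define y where "y = \<theta>s t - \<eta> t *\<^sub>R g t"
        have step: "\<theta>s (Suc t) = closest_point (cball \<theta>1 R) y"
          using \<theta>s_step[OF t(1)] by (simp add: y_def g_def)
        have "dist (\<theta>s (Suc t)) \<theta> \<le> dist y \<theta>"
          using closest_point_lipschitz[of "cball \<theta>1 R" y \<theta>] closest_point_self[OF \<theta>B] step R_pos by simp
        then have "(norm (\<theta>s (Suc t) - \<theta>))^2 \<le> (norm (y - \<theta>))^2"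
          by (simp add: dist_norm power_mono)
        also have "(norm (y - \<theta>))^2 = (norm (\<theta>s t - \<theta>))^2 - 2 * \<eta> t * (g t \<bullet> (\<theta>s t - \<theta>)) + (\<eta> t)^2 * (norm (g t))^2"
        proof -
          have "y - \<theta> = (\<theta>s t - \<theta>) - \<eta> t *\<^sub>R g t" by (simp add: y_def)
          then show ?thesis by (simp only: norm_sub_scale)
        qed
        finally have "A (Suc t) \<le> A t - 2 * \<eta> t * (g t \<bullet> (\<theta>s t - \<theta>)) + (\<eta> t)^2 * (norm (g t))^2"
          using t by (simp add: A_def)
        moreover have "(\<eta> t)^2 * (norm (g t))^2 \<le> (\<eta> t)^2 * G^2"
          using key[OF t] by (intro mult_left_mono power_mono) auto
        ultimately have "2 * \<eta> t * (g t \<bullet> (\<theta>s t - \<theta>)) \<le> A t - A (Suc t) + (\<eta> t)^2 * G^2" by linarith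
        then have "g t \<bullet> (\<theta>s t - \<theta>) \<le> (A t - A (Suc t)) / (2 * \<eta> t) + \<eta> t * G^2 / 2"
          using etp by (simp add: field_simps power2_eq_square)
        also have "\<dots> = (A t - A (Suc t)) * sqrt (real t) / (2 * e0) + e0 * G^2 / (2 * sqrt (real t))"
          using et by simp
        finally show ?thesis .
      qed
      have "(\<Sum>t=1..T. g t \<bullet> (\<theta>s t - \<theta>)) \<le> (2 * R)^2 * sqrt (real T) / (2 * e0) - A (Suc T) * sqrt (real T) / (2 * e0)
            + e0 * G^2 / 2 * (\<Sum>t=1..T. 1 / sqrt (real t))"
        by (rule ogd_sum[OF e0p A0 AD qb])
      also have "\<dots> \<le> (2 * R)^2 * sqrt (real T) / (2 * e0) + e0 * G^2 / 2 * (2 * sqrt (real T))"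
      proof -
        have "0 \<le> A (Suc T) * sqrt (real T) / (2 * e0)" using A0 e0p by simp
        moreover have "e0 * G^2 / 2 * (\<Sum>t=1..T. 1 / sqrt (real t)) \<le> e0 * G^2 / 2 * (2 * sqrt (real T))"
          using e0p by (intro mult_left_mono sum_inv_sqrt) auto
        ultimately show ?thesis by linarith
      qed
      also have "\<dots> = 3 * C * L * R * sqrt (real m * real T) / b"
      proof -
        have sm: "sqrt (real m) > 0" using m_pos by simp
        have sq: "(sqrt (real m))^2 = real m" using m_pos by simp
        show ?thesis
          unfolding e0_def G_def real_sqrt_mult using sm b_pos C_pos Lp R_pos
          by (simp add: field_simps power2_eq_square)
      qed
      finally show ?thesis .
    qed
    show ?thesis using sum_split regret unfolding ell_def by (simp add: algebra_simps)
  qed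
qed

end
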